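(* Let $(R,\mathfrak m)$ be a $d$-dimensional Noetherian local ring of prime characteristic $p>0$, and let $I_\bullet=\{I_q\}$ be a sequence of ideals indexed by powers $q$ of $p$ with $\mathfrak m^{cq}\subseteq I_q$ for some positive integer $c$ and all $q$. Let $x\in R$ be a nonzerodivisor and $L_\bullet=\{L_q\}$ a sequence of ideals with $I_q\subseteq L_q\subseteq(I_q:x)$ for all $q$. Then there is a constant $\gamma>0$ with \[\ell_R(R/I_q)-\ell_R(R/L_q)\le\gamma\cdot q^{d-1}\] for all powers $q$ of $p$.
   Context: $q$ ranges over the powers $p^e$, $e\ge0$. *)

theory Defs
  imports Complex_Main "HOL-Computational_Algebra.Primes"
begin

definition is_ideal :: "'a::comm_ring_1 set \<Rightarrow> bool" where
  "is_ideal I \<longleftrightarrow> 0 \<in> I \<and> (\<forall>a\<in>I. \<forall>b\<in>I. a + b \<in> I) \<and> (\<forall>a\<in>I. \<forall>r. r * a \<in> I)"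

definition ideal_gen :: "'a::comm_ring_1 set \<Rightarrow> 'a set" where
  "ideal_gen S = \<Inter>{J. is_ideal J \<and> S \<subseteq> J}"

definition prime_ideal :: "'a::comm_ring_1 set \<Rightarrow> bool" where
  "prime_ideal P \<longleftrightarrow> is_ideal P \<and> P \<noteq> UNIV \<and> (\<forall>a b. a * b \<in> P \<longrightarrow> a \<in> P \<or> b \<in> P)"

definition maximal_ideal :: "'a::comm_ring_1 set \<Rightarrow> bool" where
  "maximal_ideal M \<longleftrightarrow> is_ideal M \<and> M \<noteq> UNIV \<and>
     (\<forall>J. is_ideal J \<and> M \<subseteq> J \<longrightarrow> J = M \<or> J = UNIV)"

definition noetherian_ring :: "'a::comm_ring_1 itself \<Rightarrow> bool" where
  "noetherian_ring _ \<longleftrightarrow> (\<forall>I::'a set. is_ideal I \<longrightarrow> (\<exists>S. finite S \<and> I = ideal_gen S))"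

definition local_ring :: "'a::comm_ring_1 set \<Rightarrow> bool" where
  "local_ring m \<longleftrightarrow> maximal_ideal m \<and> (\<forall>M. maximal_ideal M \<longrightarrow> M = m)"

definition prime_chain :: "(nat \<Rightarrow> 'a::comm_ring_1 set) \<Rightarrow> nat \<Rightarrow> bool" where
  "prime_chain P n \<longleftrightarrow> (\<forall>i\<le>n. prime_ideal (P i)) \<and> (\<forall>i<n. P i \<subset> P (Suc i))"

definition krull_dim :: "'a::comm_ring_1 itself \<Rightarrow> nat \<Rightarrow> bool" where
  "krull_dim _ d \<longleftrightarrow> (\<exists>P::nat \<Rightarrow> 'a set. prime_chain P d) \<and>
                     \<not> (\<exists>P::nat \<Rightarrow> 'a set. prime_chain P (Suc d))"

definition ideal_pow :: "'a::comm_ring_1 set \<Rightarrow> nat \<Rightarrow> 'a set" where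
  "ideal_pow m n = ideal_gen {prod_list xs | xs. length xs = n \<and> set xs \<subseteq> m}"

definition colon_ideal :: "'a::comm_ring_1 set \<Rightarrow> 'a \<Rightarrow> 'a set" where
  "colon_ideal I x = {r. r * x \<in> I}"

text \<open>Length of the R-module R/I: supremum of lengths of strict chains of submodules
of R/I, i.e. of ideals I = J_0 < J_1 < ... < J_n = R. (Meaningful when finite.)\<close>
definition quot_length :: "'a::comm_ring_1 set \<Rightarrow> nat" where
  "quot_length I = Sup {n. \<exists>J::nat \<Rightarrow> 'a set. J 0 = I \<and> J n = UNIV \<and>
      (\<forall>i\<le>n. is_ideal (J i)) \<and> (\<forall>i<n. J i \<subset> J (Suc i))}"

end

theory Submission
  imports Defs "HOL-Library.Set_Algebras"
begin

definition princ :: "'a::comm_ring_1 \<Rightarrow> 'a set" where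
  "princ b = range (\<lambda>r. r * b)"

lemma ideal_0: "is_ideal I \<Longrightarrow> 0 \<in> I" by (simp add: is_ideal_def)
lemma ideal_add: "is_ideal I \<Longrightarrow> a \<in> I \<Longrightarrow> b \<in> I \<Longrightarrow> a + b \<in> I" by (simp add: is_ideal_def)
lemma ideal_mult: "is_ideal I \<Longrightarrow> a \<in> I \<Longrightarrow> r * a \<in> I" by (simp add: is_ideal_def)
lemma ideal_multR: "is_ideal I \<Longrightarrow> a \<in> I \<Longrightarrow> a * r \<in> I" by (metis ideal_mult mult.commute)
lemma ideal_neg: "is_ideal I \<Longrightarrow> a \<in> I \<Longrightarrow> - a \<in> I"
  using ideal_mult[of I a "-1"] by simp
lemma ideal_diff: "is_ideal I \<Longrightarrow> a \<in> I \<Longrightarrow> b \<in> I \<Longrightarrow> a - b \<in> I"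
  using ideal_add[of I a "-b"] ideal_neg[of I b] by simp
lemma ideal_one: "is_ideal I \<Longrightarrow> 1 \<in> I \<Longrightarrow> I = UNIV"
  using ideal_mult[of I 1] by auto
lemma ideal_UNIV: "is_ideal UNIV" by (simp add: is_ideal_def)
lemma ideal_zero: "is_ideal {0::'a::comm_ring_1}" by (simp add: is_ideal_def)
lemma ideal_Int: "is_ideal A \<Longrightarrow> is_ideal B \<Longrightarrow> is_ideal (A \<inter> B)" by (simp add: is_ideal_def)
lemma ideal_plus: "is_ideal A \<Longrightarrow> is_ideal B \<Longrightarrow> is_ideal (A + B)"
proof -
  assume A: "is_ideal A" and B: "is_ideal B"
  have 0: "0 \<in> A + B" using ideal_0[OF A] ideal_0[OF B] set_plus_intro[of 0 A 0 B] by simp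
  have a: "u + v \<in> A + B" if uu: "u \<in> A + B" and vv: "v \<in> A + B" for u v
  proof -
    obtain a1 b1 where 1: "u = a1 + b1" "a1 \<in> A" "b1 \<in> B" using uu unfolding set_plus_def by blast
    obtain a2 b2 where 2: "v = a2 + b2" "a2 \<in> A" "b2 \<in> B" using vv unfolding set_plus_def by blast
    have "u + v = (a1 + a2) + (b1 + b2)" using 1 2 by (simp add: algebra_simps)
    then show ?thesis using ideal_add[OF A 1(2) 2(2)] ideal_add[OF B 1(3) 2(3)] set_plus_intro by metis
  qed
  have m: "r * u \<in> A + B" if uu: "u \<in> A + B" for u r
  proof -
    obtain a1 b1 where 1: "u = a1 + b1" "a1 \<in> A" "b1 \<in> B" using uu unfolding set_plus_def by blast
    have "r * u = r * a1 + r * b1" using 1 by (simp add: algebra_simps)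
    then show ?thesis using ideal_mult[OF A 1(2)] ideal_mult[OF B 1(3)] set_plus_intro by metis
  qed
  show ?thesis unfolding is_ideal_def using 0 a m by blast
qed

lemma ideal_princ: "is_ideal (princ b)"
  unfolding is_ideal_def princ_def
proof (intro conjI ballI allI)
  show "0 \<in> range (\<lambda>r. r * b)" using rangeI[of "\<lambda>r. r * b" 0] by simp
next
  fix u v assume "u \<in> range (\<lambda>r. r * b)" "v \<in> range (\<lambda>r. r * b)"
  then obtain r s where "u = r * b" "v = s * b" by blast
  then have "u + v = (r + s) * b" by (simp add: algebra_simps)
  then show "u + v \<in> range (\<lambda>r. r * b)" by blast
next
  fix u t assume "u \<in> range (\<lambda>r. r * b)"
  then obtain r where "u = r * b" by blast
  then have "t * u = (t * r) * b" by (simp add: algebra_simps)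
  then show "t * u \<in> range (\<lambda>r. r * b)" by blast
qed
lemma princ_self: "b \<in> princ b" unfolding princ_def using rangeI[of "\<lambda>r. r * b" 1] by simp
lemma princ_sub: "is_ideal I \<Longrightarrow> b \<in> I \<Longrightarrow> princ b \<subseteq> I"
  unfolding princ_def using ideal_mult by blast
lemma ideal_colon: "is_ideal I \<Longrightarrow> is_ideal (colon_ideal I x)"
  unfolding is_ideal_def colon_ideal_def
  by (auto simp: distrib_right mult.assoc)
lemma colon_sup: "is_ideal I \<Longrightarrow> I \<subseteq> colon_ideal I x"
  unfolding colon_ideal_def using ideal_multR by blast
lemma ideal_gen_ideal: "is_ideal (ideal_gen S)"
  unfolding ideal_gen_def is_ideal_def by auto
lemma ideal_gen_sup: "S \<subseteq> ideal_gen S" unfolding ideal_gen_def by auto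
lemma ideal_gen_least: "is_ideal J \<Longrightarrow> S \<subseteq> J \<Longrightarrow> ideal_gen S \<subseteq> J"
  unfolding ideal_gen_def by auto
lemma plus_sub1: "is_ideal B \<Longrightarrow> A \<subseteq> A + B"
  unfolding set_plus_def using ideal_0 by force
lemma plus_sub2: "is_ideal A \<Longrightarrow> B \<subseteq> A + B"
  unfolding set_plus_def using ideal_0 by force
lemma plus_least: "is_ideal C \<Longrightarrow> A \<subseteq> C \<Longrightarrow> B \<subseteq> C \<Longrightarrow> A + B \<subseteq> C"
  unfolding set_plus_def using ideal_add by fastforce
lemma plus_mono: "A \<subseteq> A' \<Longrightarrow> B \<subseteq> B' \<Longrightarrow> A + B \<subseteq> A' + B'"
  unfolding set_plus_def by blast
lemma ideal_sum_princ: "is_ideal (sum_list (map princ ys))"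
  by (induction ys) (auto simp: ideal_zero ideal_plus ideal_princ)

definition bnd :: "'a::comm_ring_1 set \<Rightarrow> 'a set \<Rightarrow> nat \<Rightarrow> bool" where
  "bnd A B k \<longleftrightarrow> (\<forall>J n. (\<forall>i\<le>n. is_ideal (J i) \<and> A \<subseteq> J i \<and> J i \<subseteq> B) \<longrightarrow>
      (\<forall>i<n. J i \<subseteq> J (Suc i)) \<longrightarrow> card {i. i<n \<and> J i \<subset> J (Suc i)} \<le> k)"

lemma bnd_mono:
  assumes a: "bnd A B k" "A \<subseteq> A'" "B' \<subseteq> B" "k \<le> k'"
  shows "bnd A' B' k'"
  unfolding bnd_def
proof (intro allI impI)
  fix J :: "nat \<Rightarrow> 'a set" and n
  assume J: "\<forall>i\<le>n. is_ideal (J i) \<and> A' \<subseteq> J i \<and> J i \<subseteq> B'" and mo: "\<forall>i<n. J i \<subseteq> J (Suc i)"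
  have "\<forall>i\<le>n. is_ideal (J i) \<and> A \<subseteq> J i \<and> J i \<subseteq> B" using J a by blast
  then have "card {i. i<n \<and> J i \<subset> J (Suc i)} \<le> k" using a(1) mo unfolding bnd_def by blast
  then show "card {i. i<n \<and> J i \<subset> J (Suc i)} \<le> k'" using a(4) by linarith
qed

lemma bnd_apply:
  assumes "bnd A B k" "\<And>i. i \<le> n \<Longrightarrow> is_ideal (J i)" "\<And>i. i \<le> n \<Longrightarrow> A \<subseteq> J i"
    "\<And>i. i \<le> n \<Longrightarrow> J i \<subseteq> B" "\<And>i. i < n \<Longrightarrow> J i \<subseteq> J (Suc i)"
  shows "card {i. i<n \<and> J i \<subset> J (Suc i)} \<le> k"
  using assms unfolding bnd_def by blast

lemma modular:
  assumes "is_ideal X" "is_ideal Y" "is_ideal K" "X \<subseteq> Y" "X \<inter> K = Y \<inter> K" "X + K = Y + K"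
  shows "X = Y"
proof -
  have "Y \<subseteq> X"
  proof
    fix z assume z: "z \<in> Y"
    have "z \<in> Y + K" using z plus_sub1[OF assms(3)] by blast
    then have "z \<in> X + K" using assms(6) by simp
    then obtain a k where a: "a \<in> X" "k \<in> K" "z = a + k" unfolding set_plus_def by blast
    have "k = z - a" using a by simp
    have "a \<in> Y" using a assms(4) by blast
    then have "k \<in> Y" using ideal_diff[OF assms(2) z] \<open>k = z - a\<close> by simp
    then have "k \<in> X" using a assms(5) by blast
    then show "z \<in> X" using a ideal_add[OF assms(1)] by simp
  qed
  then show ?thesis using assms(4) by blast
qed

lemma bnd_add:
  assumes "is_ideal K" "is_ideal B" "A \<subseteq> K" "K \<subseteq> B" "bnd A K a" "bnd K B b"
  shows "bnd A B (a + b)"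
  unfolding bnd_def
proof (intro allI impI)
  fix J :: "nat \<Rightarrow> 'a set" and n
  assume J: "\<forall>i\<le>n. is_ideal (J i) \<and> A \<subseteq> J i \<and> J i \<subseteq> B" and mo: "\<forall>i<n. J i \<subseteq> J (Suc i)"
  let ?J1 = "\<lambda>i. J i \<inter> K" and ?J2 = "\<lambda>i. J i + K"
  have c1: "card {i. i<n \<and> ?J1 i \<subset> ?J1 (Suc i)} \<le> a"
  proof (rule bnd_apply[OF assms(5)])
    fix i assume i: "i \<le> n"
    show "is_ideal (J i \<inter> K)" using J i assms(1) ideal_Int by blast
    show "A \<subseteq> J i \<inter> K" using J i assms(3) by blast
    show "J i \<inter> K \<subseteq> K" by blast
  next
    fix i assume "i < n" then show "J i \<inter> K \<subseteq> J (Suc i) \<inter> K" using mo by blast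
  qed
  have c2: "card {i. i<n \<and> ?J2 i \<subset> ?J2 (Suc i)} \<le> b"
  proof (rule bnd_apply[OF assms(6)])
    fix i assume i: "i \<le> n"
    show "is_ideal (J i + K)" using J i assms(1) ideal_plus by blast
    show "K \<subseteq> J i + K" using J i plus_sub2 by blast
    show "J i + K \<subseteq> B" using J i assms(2,4) plus_least[of B "J i" K] by blast
  next
    fix i assume "i < n" then show "J i + K \<subseteq> J (Suc i) + K" using mo plus_mono[of "J i" "J (Suc i)" K K] by blast
  qed
  have sub: "{i. i<n \<and> J i \<subset> J (Suc i)} \<subseteq> {i. i<n \<and> ?J1 i \<subset> ?J1 (Suc i)} \<union> {i. i<n \<and> ?J2 i \<subset> ?J2 (Suc i)}"
  proof
    fix i assume i: "i \<in> {i. i<n \<and> J i \<subset> J (Suc i)}"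
    show "i \<in> {i. i<n \<and> ?J1 i \<subset> ?J1 (Suc i)} \<union> {i. i<n \<and> ?J2 i \<subset> ?J2 (Suc i)}"
    proof (rule ccontr)
      assume nn: "\<not> ?thesis"
      have s1: "?J1 i \<subseteq> ?J1 (Suc i)" "?J2 i \<subseteq> ?J2 (Suc i)" using i plus_mono[of "J i" "J (Suc i)" K K] by auto
      have "?J1 i = ?J1 (Suc i)" "?J2 i = ?J2 (Suc i)" using nn s1 i by auto
      moreover have "is_ideal (J i)" "is_ideal (J (Suc i))" using J i by auto
      ultimately have "J i = J (Suc i)" using modular[of "J i" "J (Suc i)" K] assms(1) s1 i by blast
      then show False using i by auto
    qed
  qed
  have "card {i. i<n \<and> J i \<subset> J (Suc i)} \<le> card ({i. i<n \<and> ?J1 i \<subset> ?J1 (Suc i)} \<union> {i. i<n \<and> ?J2 i \<subset> ?J2 (Suc i)})"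
    by (rule card_mono[OF _ sub]) auto
  also have "\<dots> \<le> card {i. i<n \<and> ?J1 i \<subset> ?J1 (Suc i)} + card {i. i<n \<and> ?J2 i \<subset> ?J2 (Suc i)}"
    by (rule card_Un_le)
  finally show "card {i. i<n \<and> J i \<subset> J (Suc i)} \<le> a + b" using c1 c2 by linarith
qed

lemma colon_mono: "A \<subseteq> B \<Longrightarrow> colon_ideal A b \<subseteq> colon_ideal B b"
  unfolding colon_ideal_def by auto

lemma bnd_cyclic:
  assumes A: "is_ideal A" and h: "bnd (colon_ideal A b) UNIV k"
  shows "bnd A (A + princ b) k"
  unfolding bnd_def
proof (intro allI impI)
  fix J :: "nat \<Rightarrow> 'a set" and n
  assume J: "\<forall>i\<le>n. is_ideal (J i) \<and> A \<subseteq> J i \<and> J i \<subseteq> A + princ b" and mo: "\<forall>i<n. J i \<subseteq> J (Suc i)"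
  let ?C = "\<lambda>i. colon_ideal (J i) b"
  have c: "card {i. i<n \<and> ?C i \<subset> ?C (Suc i)} \<le> k"
    using h unfolding bnd_def
    apply (elim allE[of _ ?C] allE[of _ n])
    using J mo colon_mono[of A "J _" b] colon_mono[of "J _" "J (Suc _)" b]
    by (simp add: ideal_colon)
  have sub: "{i. i<n \<and> J i \<subset> J (Suc i)} \<subseteq> {i. i<n \<and> ?C i \<subset> ?C (Suc i)}"
  proof
    fix i assume i: "i \<in> {i. i<n \<and> J i \<subset> J (Suc i)}"
    have s: "?C i \<subseteq> ?C (Suc i)" using i unfolding colon_ideal_def by auto
    have "?C i \<noteq> ?C (Suc i)"
    proof
      assume eq: "?C i = ?C (Suc i)"
      have "J (Suc i) \<subseteq> J i"
      proof
        fix z assume z: "z \<in> J (Suc i)"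
        have Ji: "is_ideal (J (Suc i))" "A \<subseteq> J (Suc i)" "J (Suc i) \<subseteq> A + princ b" "is_ideal (J i)" "A \<subseteq> J i"
          using J i by auto
        then obtain a r where ar: "a \<in> A" "z = a + r * b" using z unfolding set_plus_def princ_def by blast
        have "r * b = z - a" using ar by simp
        moreover have "a \<in> J (Suc i)" using ar Ji(2) by blast
        ultimately have "r * b \<in> J (Suc i)" using ideal_diff[OF Ji(1) z] by simp
        then have "r \<in> ?C i" using eq unfolding colon_ideal_def by auto
        then have "r * b \<in> J i" unfolding colon_ideal_def by auto
        then show "z \<in> J i" using ar Ji(5) ideal_add[OF Ji(4)] by auto
      qed
      then show False using i by auto
    qed
    then show "i \<in> {i. i<n \<and> ?C i \<subset> ?C (Suc i)}" using s i by auto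
  qed
  have "card {i. i<n \<and> J i \<subset> J (Suc i)} \<le> card {i. i<n \<and> ?C i \<subset> ?C (Suc i)}"
    by (rule card_mono[OF _ sub]) auto
  then show "card {i. i<n \<and> J i \<subset> J (Suc i)} \<le> k" using c by linarith
qed

lemma bnd_top:
  assumes "maximal_ideal m" "m \<subseteq> K"
  shows "bnd K UNIV 1"
  unfolding bnd_def
proof (intro allI impI)
  fix J :: "nat \<Rightarrow> 'a set" and n
  assume J: "\<forall>i\<le>n. is_ideal (J i) \<and> K \<subseteq> J i \<and> J i \<subseteq> UNIV" and mo: "\<forall>i<n. J i \<subseteq> J (Suc i)"
  have JJ: "\<And>i. i \<le> n \<Longrightarrow> J i = m \<or> J i = UNIV"
    using J assms unfolding maximal_ideal_def by blast
  have mono: "\<And>i j. i \<le> j \<Longrightarrow> j \<le> n \<Longrightarrow> J i \<subseteq> J j"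
  proof -
    fix i j :: nat assume "i \<le> j" "j \<le> n"
    then show "J i \<subseteq> J j"
    proof (induction j)
      case 0 then show ?case by simp
    next
      case (Suc j) then show ?case using mo
        by (metis Suc_le_lessD dual_order.trans le_Suc_eq order.refl)
    qed
  qed
  have "{i. i<n \<and> J i \<subset> J (Suc i)} \<subseteq> {LEAST i. i<n \<and> J i \<subset> J (Suc i)}"
  proof
    fix i assume i: "i \<in> {i. i<n \<and> J i \<subset> J (Suc i)}"
    let ?l = "LEAST i. i<n \<and> J i \<subset> J (Suc i)"
    have ex: "\<exists>i. i<n \<and> J i \<subset> J (Suc i)" using i by blast
    have l: "?l < n \<and> J ?l \<subset> J (Suc ?l)" "?l \<le> i"
      using LeastI_ex[OF ex] apply blast
      using i by (simp add: Least_le)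
    have "i = ?l"
    proof (rule ccontr)
      assume "i \<noteq> ?l"
      then have "Suc ?l \<le> i" using l by auto
      then have "J (Suc ?l) \<subseteq> J i" using mono i by auto
      moreover have "J (Suc ?l) = UNIV" using JJ[of "Suc ?l"] JJ[of ?l] l by auto
      ultimately show False using i by auto
    qed
    then show "i \<in> {LEAST i. i<n \<and> J i \<subset> J (Suc i)}" by simp
  qed
  then have "card {i. i<n \<and> J i \<subset> J (Suc i)} \<le> card {LEAST i. i<n \<and> J i \<subset> J (Suc i)}"
    by (intro card_mono) auto
  then show "card {i. i<n \<and> J i \<subset> J (Suc i)} \<le> 1" by simp
qed

definition QS :: "'a::comm_ring_1 set \<Rightarrow> nat set" where
  "QS I = {n. \<exists>J::nat \<Rightarrow> 'a set. J 0 = I \<and> J n = UNIV \<and>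
      (\<forall>i\<le>n. is_ideal (J i)) \<and> (\<forall>i<n. J i \<subset> J (Suc i))}"

lemma ql_QS: "quot_length I = Sup (QS I)"
  unfolding quot_length_def QS_def by simp

lemma chain_sup: "(\<forall>i<n. J i \<subseteq> J (Suc i)) \<Longrightarrow> i \<le> n \<Longrightarrow> J 0 \<subseteq> J i"
proof (induction i)
  case 0 then show ?case by simp
next
  case (Suc i)
  then have "J 0 \<subseteq> J i" "J i \<subseteq> J (Suc i)" by auto
  then show ?case by (rule order_trans)
qed

lemma QS_bound:
  assumes "bnd I UNIV k" "n \<in> QS I"
  shows "n \<le> k"
proof -
  obtain J where J: "J 0 = I" "J n = UNIV" "\<forall>i\<le>n. is_ideal (J i)" "\<forall>i<n. J i \<subset> J (Suc i)"
    using assms(2) unfolding QS_def by blast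
  have mo: "\<forall>i<n. J i \<subseteq> J (Suc i)" using J(4) by auto
  have "card {i. i<n \<and> J i \<subset> J (Suc i)} \<le> k"
  proof (rule bnd_apply[OF assms(1)])
    fix i assume "i \<le> n"
    then show "is_ideal (J i)" "I \<subseteq> J i" "J i \<subseteq> UNIV" using J chain_sup[OF mo] by auto
  next
    fix i assume "i < n" then show "J i \<subseteq> J (Suc i)" using mo by auto
  qed
  moreover have "{i. i<n \<and> J i \<subset> J (Suc i)} = {..<n}" using J(4) by auto
  ultimately show ?thesis by simp
qed

lemma ql_le:
  assumes "bnd I UNIV k"
  shows "quot_length I \<le> k"
proof (cases "QS I = {}")
  case True then show ?thesis by (simp add: ql_QS)
next
  case False
  then show ?thesis unfolding ql_QS by (rule cSup_least) (use QS_bound[OF assms] in auto)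
qed

lemma compress:
  assumes "\<forall>i<n. J i \<subseteq> J (Suc i)"
  shows "\<exists>K. K 0 = J 0 \<and> K (card {i. i<n \<and> J i \<subset> J (Suc i)}) = J n \<and>
    (\<forall>i\<le>card {i. i<n \<and> J i \<subset> J (Suc i)}. \<exists>j\<le>n. K i = J j) \<and>
    (\<forall>i<card {i. i<n \<and> J i \<subset> J (Suc i)}. K i \<subset> K (Suc i))"
  using assms
proof (induction n)
  case 0
  show ?case by (rule exI[of _ J]) auto
next
  case (Suc n)
  let ?S = "{i. i<n \<and> J i \<subset> J (Suc i)}"
  have fin: "finite ?S" by auto
  obtain K where K: "K 0 = J 0" "K (card ?S) = J n" "\<forall>i\<le>card ?S. \<exists>j\<le>n. K i = J j"
    "\<forall>i<card ?S. K i \<subset> K (Suc i)" using Suc by auto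
  show ?case
  proof (cases "J n \<subset> J (Suc n)")
    case True
    have eq: "{i. i<Suc n \<and> J i \<subset> J (Suc i)} = insert n ?S" using True by auto
    have c: "card {i. i<Suc n \<and> J i \<subset> J (Suc i)} = Suc (card ?S)" unfolding eq using fin by simp
    let ?K = "K(Suc (card ?S) := J (Suc n))"
    show ?thesis unfolding c
    proof (rule exI[of _ ?K], intro conjI allI impI)
      show "?K 0 = J 0" using K by simp
      show "?K (Suc (card ?S)) = J (Suc n)" by simp
    next
      fix i assume "i \<le> Suc (card ?S)"
      show "\<exists>j\<le>Suc n. ?K i = J j"
      proof (cases "i = Suc (card ?S)")
        case True then show ?thesis by auto
      next
        case False
        then have "i \<le> card ?S" using \<open>i \<le> Suc (card ?S)\<close> by simp
        then obtain j where "j \<le> n" "K i = J j" using K(3) by blast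
        then show ?thesis using False by (intro exI[of _ j]) simp
      qed
    next
      fix i assume i: "i < Suc (card ?S)"
      show "?K i \<subset> ?K (Suc i)"
      proof (cases "i = card ?S")
        case True then show ?thesis using K(2) \<open>J n \<subset> J (Suc n)\<close> by simp
      next
        case False then show ?thesis using K(4) i by simp
      qed
    qed
  next
    case False
    have eq: "{i. i<Suc n \<and> J i \<subset> J (Suc i)} = ?S" using False by (auto simp: less_Suc_eq)
    have "J (Suc n) = J n" using False Suc.prems by auto
    show ?thesis unfolding eq
    proof (rule exI[of _ K], intro conjI allI impI)
      show "K 0 = J 0" using K by simp
      show "K (card ?S) = J (Suc n)" using K \<open>J (Suc n) = J n\<close> by simp
    next
      fix i assume "i \<le> card ?S"
      then obtain j where "j \<le> n" "K i = J j" using K(3) by blast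
      then show "\<exists>j\<le>Suc n. K i = J j" by (intro exI[of _ j]) simp
    next
      fix i assume "i < card ?S" then show "K i \<subset> K (Suc i)" using K(4) by simp
    qed
  qed
qed

lemma ql_bnd:
  assumes "is_ideal I" "bnd I UNIV k"
  shows "bnd I UNIV (quot_length I)"
  unfolding bnd_def
proof (intro allI impI)
  fix J :: "nat \<Rightarrow> 'a set" and n
  assume J: "\<forall>i\<le>n. is_ideal (J i) \<and> I \<subseteq> J i \<and> J i \<subseteq> UNIV" and mo: "\<forall>i<n. J i \<subseteq> J (Suc i)"
  define J' where "J' i = (if i = 0 then I else if i \<le> Suc n then J (i - 1) else UNIV)" for i
  have mo': "\<forall>i<Suc (Suc n). J' i \<subseteq> J' (Suc i)"
  proof (intro allI impI)
    fix i assume i: "i < Suc (Suc n)"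
    show "J' i \<subseteq> J' (Suc i)"
    proof (cases "i = 0")
      case True then show ?thesis using J by (simp add: J'_def)
    next
      case False
      then obtain j where j: "i = Suc j" by (cases i) auto
      show ?thesis
      proof (cases "j < n")
        case True then show ?thesis using mo j by (simp add: J'_def)
      next
        case False then show ?thesis using j i by (simp add: J'_def)
      qed
    qed
  qed
  let ?S' = "{i. i<Suc (Suc n) \<and> J' i \<subset> J' (Suc i)}"
  obtain K where K: "K 0 = J' 0" "K (card ?S') = J' (Suc (Suc n))" "\<forall>i\<le>card ?S'. \<exists>j\<le>Suc (Suc n). K i = J' j"
    "\<forall>i<card ?S'. K i \<subset> K (Suc i)" using compress[OF mo'] by blast
  have idl: "is_ideal (J' j)" for j unfolding J'_def using J assms(1) by (auto simp: ideal_UNIV)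
  have Kid: "\<forall>i\<le>card ?S'. is_ideal (K i)" using K(3) idl by metis
  have "K 0 = I" "K (card ?S') = UNIV" using K by (auto simp: J'_def)
  then have "card ?S' \<in> QS I" unfolding QS_def using Kid K(4) by blast
  then have c1: "card ?S' \<le> quot_length I" unfolding ql_QS
    by (rule cSup_upper) (use QS_bound[OF assms(2)] in \<open>auto simp: bdd_above_def\<close>)
  have "Suc ` {i. i<n \<and> J i \<subset> J (Suc i)} \<subseteq> ?S'" by (auto simp: J'_def)
  then have "card (Suc ` {i. i<n \<and> J i \<subset> J (Suc i)}) \<le> card ?S'" by (intro card_mono) auto
  then show "card {i. i<n \<and> J i \<subset> J (Suc i)} \<le> quot_length I" using c1 by (simp add: card_image)
qed

lemma ql_mono:
  assumes "is_ideal A" "A \<subseteq> B" "bnd A UNIV k"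
  shows "quot_length B \<le> quot_length A"
  using ql_le bnd_mono[OF ql_bnd[OF assms(1,3)] assms(2)] by blast

lemma bnd_refl: "bnd A A 0"
  unfolding bnd_def
proof (intro allI impI)
  fix J :: "nat \<Rightarrow> 'a set" and n
  assume J: "\<forall>i\<le>n. is_ideal (J i) \<and> A \<subseteq> J i \<and> J i \<subseteq> A"
  have "\<And>i. i < n \<Longrightarrow> J i = J (Suc i)"
  proof -
    fix i assume "i < n"
    then have "i \<le> n" "Suc i \<le> n" by auto
    then have "J i = A" "J (Suc i) = A" using J by blast+
    then show "J i = J (Suc i)" by simp
  qed
  then have "{i. i<n \<and> J i \<subset> J (Suc i)} = {}" by auto
  then show "card {i. i<n \<and> J i \<subset> J (Suc i)} \<le> 0" by simp
qed

lemma bnd_gens: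
  assumes "maximal_ideal m"
  shows "is_ideal A \<Longrightarrow> (\<forall>s\<in>set ss. \<forall>r\<in>m. r * s \<in> A) \<Longrightarrow> bnd A (A + sum_list (map princ ss)) (length ss)"
proof (induction ss arbitrary: A)
  case Nil then show ?case by (simp add: bnd_refl)
next
  case (Cons s ss)
  let ?K = "A + princ s"
  have Kid: "is_ideal ?K" using Cons ideal_plus ideal_princ by blast
  have "m \<subseteq> colon_ideal A s" using Cons.prems unfolding colon_ideal_def by auto
  then have b1: "bnd A ?K 1" using bnd_cyclic[OF Cons.prems(1)] bnd_top[OF assms] by blast
  have "A \<subseteq> ?K" using plus_sub1[OF ideal_princ] by blast
  then have b2: "bnd ?K (?K + sum_list (map princ ss)) (length ss)"
    using Cons.IH[OF Kid] Cons.prems(2) by auto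
  have eq: "A + sum_list (map princ (s # ss)) = ?K + sum_list (map princ ss)" by (simp add: add.assoc)
  have "bnd A (?K + sum_list (map princ ss)) (1 + length ss)"
    by (rule bnd_add[OF Kid ideal_plus[OF Kid ideal_sum_princ] \<open>A \<subseteq> ?K\<close> plus_sub1[OF ideal_sum_princ] b1 b2])
  then show ?case unfolding eq by simp
qed

lemma princ_pow_sub: "princ (y ^ Suc N) \<subseteq> princ (y ^ N)"
  unfolding princ_def
proof (rule image_subsetI)
  fix r show "r * y ^ Suc N \<in> range (\<lambda>r. r * y ^ N)"
    using rangeI[of "\<lambda>r. r * y ^ N" "r * y"] by (simp add: ac_simps)
qed

lemma bnd_pow1:
  assumes J: "is_ideal J" and h: "bnd (J + princ y) UNIV k"
  shows "bnd (J + princ (y ^ N)) UNIV (N * k)"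
proof (induction N)
  case 0
  have "princ (1::'a) = UNIV" unfolding princ_def by auto
  then have "J + princ (y ^ 0) = UNIV" using plus_sub2[OF J, of UNIV] by auto
  then show ?case by (simp add: bnd_refl)
next
  case (Suc N)
  let ?A = "J + princ (y ^ Suc N)" and ?K = "J + princ (y ^ N)"
  have Aid: "is_ideal ?A" and Kid: "is_ideal ?K" using J ideal_plus ideal_princ by blast+
  have eqK: "?A + princ (y ^ N) = ?K"
  proof
    show "?A + princ (y ^ N) \<subseteq> ?K"
      using plus_mono[OF order_refl princ_pow_sub, of J y N] plus_sub2[OF J, of "princ (y^N)"]
      by (metis Kid plus_least plus_sub1[OF ideal_princ, of J "y^N"] order_trans)
    show "?K \<subseteq> ?A + princ (y ^ N)"
      by (rule plus_mono[OF plus_sub1[OF ideal_princ] order_refl])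
  qed
  have "J + princ y \<subseteq> colon_ideal ?A (y ^ N)"
  proof
    fix z assume "z \<in> J + princ y"
    then obtain j r where jr: "j \<in> J" "z = j + r * y" unfolding set_plus_def princ_def by blast
    have "z * y ^ N = j * y ^ N + r * y ^ Suc N" using jr by (simp add: algebra_simps)
    moreover have "j * y ^ N \<in> J" using ideal_multR[OF J jr(1)] .
    moreover have "r * y ^ Suc N \<in> princ (y ^ Suc N)" unfolding princ_def by blast
    ultimately have "z * y ^ N \<in> ?A" using set_plus_intro by metis
    then show "z \<in> colon_ideal ?A (y ^ N)" unfolding colon_ideal_def by simp
  qed
  then have "bnd (colon_ideal ?A (y ^ N)) UNIV k" using bnd_mono[OF h] by blast
  then have b1: "bnd ?A ?K k" using bnd_cyclic[OF Aid] eqK by metis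
  have "?A \<subseteq> ?K" using eqK plus_sub1[OF ideal_princ] by metis
  then have "bnd ?A UNIV (k + N * k)" using bnd_add[OF Kid ideal_UNIV _ _ b1 Suc.IH] by simp
  then show ?case by (simp add: add.commute)
qed

lemma bnd_pow_list:
  "is_ideal J \<Longrightarrow> bnd (J + sum_list (map princ ys)) UNIV k \<Longrightarrow>
   bnd (J + sum_list (map princ (map (\<lambda>y. y ^ N) ys))) UNIV (N ^ length ys * k)"
proof (induction ys arbitrary: J k)
  case Nil then show ?case by simp
next
  case (Cons y ys)
  let ?S = "sum_list (map princ ys)"
  have J2: "is_ideal (J + ?S)" using Cons.prems ideal_plus ideal_sum_princ by blast
  have "J + sum_list (map princ (y # ys)) = (J + ?S) + princ y" by (simp add: ac_simps)
  then have "bnd ((J + ?S) + princ y) UNIV k" using Cons.prems by simp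
  then have "bnd ((J + ?S) + princ (y ^ N)) UNIV (N * k)" using bnd_pow1[OF J2] by blast
  moreover have "(J + ?S) + princ (y ^ N) = (J + princ (y ^ N)) + ?S" by (simp add: ac_simps)
  ultimately have "bnd ((J + princ (y ^ N)) + ?S) UNIV (N * k)" by simp
  then have "bnd ((J + princ (y ^ N)) + sum_list (map princ (map (\<lambda>y. y ^ N) ys))) UNIV (N ^ length ys * (N * k))"
    using Cons.IH[of "J + princ (y ^ N)"] Cons.prems(1) ideal_plus ideal_princ by blast
  then show ?case by (simp add: ac_simps)
qed

lemma chain_fin_bound:
  assumes ch: "\<forall>A\<in>C. \<forall>B\<in>C. A \<subseteq> B \<or> B \<subseteq> (A::'a set)" and ne: "C \<noteq> {}"
  shows "finite S \<Longrightarrow> S \<subseteq> \<Union>C \<Longrightarrow> \<exists>X\<in>C. S \<subseteq> X"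
proof (induction S rule: finite_induct)
  case empty then show ?case using ne by blast
next
  case (insert s S)
  then obtain X where X: "X \<in> C" "S \<subseteq> X" by blast
  obtain Y where Y: "Y \<in> C" "s \<in> Y" using insert.prems by blast
  show ?case
  proof (cases "X \<subseteq> Y")
    case True then show ?thesis using X Y by blast
  next
    case False then have "Y \<subseteq> X" using ch X Y by blast
    then show ?thesis using X Y by blast
  qed
qed

lemma chain_union_ideal:
  assumes ch: "\<forall>A\<in>C. \<forall>B\<in>C. A \<subseteq> B \<or> B \<subseteq> (A::'a::comm_ring_1 set)" and ne: "C \<noteq> {}"
    and id: "\<forall>A\<in>C. is_ideal A"
  shows "is_ideal (\<Union>C)"
  unfolding is_ideal_def
proof (intro conjI ballI allI)
  show "0 \<in> \<Union>C" using ne id ideal_0 by blast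
next
  fix a b assume "a \<in> \<Union>C" "b \<in> \<Union>C"
  then obtain X Y where X: "X \<in> C" "a \<in> X" and Y: "Y \<in> C" "b \<in> Y" by blast
  show "a + b \<in> \<Union>C"
  proof (cases "X \<subseteq> Y")
    case True then show ?thesis using X Y id ideal_add by blast
  next
    case False then have "Y \<subseteq> X" using ch X Y by blast
    then show ?thesis using X Y id ideal_add by blast
  qed
next
  fix a r assume "a \<in> \<Union>C"
  then show "r * a \<in> \<Union>C" using id ideal_mult by blast
qed

lemma noeth_union:
  assumes N: "noetherian_ring TYPE('a::comm_ring_1)"
    and ch: "\<forall>A\<in>C. \<forall>B\<in>C. A \<subseteq> B \<or> B \<subseteq> (A::'a set)" and ne: "C \<noteq> {}"
    and id: "\<forall>A\<in>C. is_ideal A"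
  shows "\<Union>C \<in> C"
proof -
  have U: "is_ideal (\<Union>C)" using chain_union_ideal[OF ch ne id] .
  then obtain S where S: "finite S" "\<Union>C = ideal_gen S" using N unfolding noetherian_ring_def by blast
  have "S \<subseteq> \<Union>C" unfolding S(2) by (rule ideal_gen_sup)
  then obtain X where X: "X \<in> C" "S \<subseteq> X" using chain_fin_bound[OF ch ne S(1)] by blast
  have Xi: "is_ideal X" using id X(1) by blast
  have "ideal_gen S \<subseteq> X" by (rule ideal_gen_least[OF Xi X(2)])
  then have "\<Union>C \<subseteq> X" using S(2) by simp
  moreover have "X \<subseteq> \<Union>C" using X(1) by (rule Union_upper)
  ultimately have "\<Union>C = X" by (rule equalityI)
  then show ?thesis using X by simp
qed

lemma noeth_max:
  assumes N: "noetherian_ring TYPE('a::comm_ring_1)"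
    and ne: "F \<noteq> {}" and id: "\<forall>I\<in>F. is_ideal (I::'a set)"
  shows "\<exists>M\<in>F. \<forall>X\<in>F. M \<subseteq> X \<longrightarrow> X = M"
proof (rule Zorn_Lemma2, intro ballI)
  fix C assume C: "C \<in> chains F"
  then have CF: "C \<subseteq> F" and ch: "\<forall>A\<in>C. \<forall>B\<in>C. A \<subseteq> B \<or> B \<subseteq> A"
    unfolding chains_def chain_subset_def by auto
  show "\<exists>U\<in>F. \<forall>X\<in>C. X \<subseteq> U"
  proof (cases "C = {}")
    case True then show ?thesis using ne by blast
  next
    case False
    have "\<Union>C \<in> C" using noeth_union[OF N ch False] CF id by blast
    then show ?thesis using CF by blast
  qed
qed

lemma max_above:
  assumes N: "noetherian_ring TYPE('a::comm_ring_1)" and P: "is_ideal (P::'a set)" "P \<noteq> UNIV"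
  shows "\<exists>M. maximal_ideal M \<and> P \<subseteq> M"
proof -
  let ?F = "{K. is_ideal K \<and> K \<noteq> UNIV \<and> P \<subseteq> K}"
  have "P \<in> ?F" using P by blast
  then have ne: "?F \<noteq> {}" by blast
  have idF: "\<forall>I\<in>?F. is_ideal I" by blast
  obtain M where M: "M \<in> ?F" "\<forall>X\<in>?F. M \<subseteq> X \<longrightarrow> X = M"
    using noeth_max[OF N ne idF] by (elim bexE)
  have "\<forall>J. is_ideal J \<and> M \<subseteq> J \<longrightarrow> J = M \<or> J = UNIV"
  proof (intro allI impI)
    fix J assume J: "is_ideal J \<and> M \<subseteq> J"
    show "J = M \<or> J = UNIV"
    proof (cases "J = UNIV")
      case False
      then have "J \<in> ?F" using J M by blast
      then show ?thesis using M J by blast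
    next
      case True then show ?thesis by simp
    qed
  qed
  then have "maximal_ideal M" unfolding maximal_ideal_def using M by blast
  then show ?thesis using M by blast
qed

lemma local_sub:
  assumes N: "noetherian_ring TYPE('a::comm_ring_1)" and L: "local_ring (m::'a set)"
    and P: "is_ideal P" "P \<noteq> UNIV"
  shows "P \<subseteq> m"
  using max_above[OF N P] L unfolding local_ring_def by blast

lemma max_prime:
  assumes M: "maximal_ideal (m::'a::comm_ring_1 set)"
  shows "prime_ideal m"
proof -
  have mi0: "is_ideal m" "m \<noteq> UNIV" using M unfolding maximal_ideal_def by auto
  have "\<forall>a b. a * b \<in> m \<longrightarrow> a \<in> m \<or> b \<in> m"
  proof (intro allI impI)
  fix a b assume ab: "a * b \<in> m"
  have mi: "is_ideal m" using M unfolding maximal_ideal_def by auto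
  show "a \<in> m \<or> b \<in> m"
  proof (cases "a \<in> m")
    case True then show ?thesis by simp
  next
    case False then have a: "a \<notin> m" .
    have J: "is_ideal (m + princ a)" using mi ideal_plus ideal_princ by blast
    have "m \<subseteq> m + princ a" using plus_sub1[OF ideal_princ] by blast
    moreover have "a \<in> m + princ a" using plus_sub2[OF mi] princ_self by blast
    ultimately have "m + princ a = UNIV" using M J a unfolding maximal_ideal_def by blast
    then have "1 \<in> m + princ a" by simp
    then obtain u r where ur: "u \<in> m" "1 = u + r * a" unfolding set_plus_def princ_def by blast
    have "b = (u + r * a) * b" using ur(2)[symmetric] by simp
    also have "\<dots> = u * b + r * (a * b)" by (simp add: algebra_simps)
    finally have "b = u * b + r * (a * b)" .
    moreover have "u * b \<in> m" using ideal_multR[OF mi ur(1)] .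
    moreover have "r * (a * b) \<in> m" using ideal_mult[OF mi ab] .
    ultimately have "b \<in> m" using ideal_add[OF mi] by metis
    then show ?thesis by simp
  qed
  qed
  then show ?thesis unfolding prime_ideal_def using mi0 by blast
qed

lemma prime_proper: "prime_ideal P \<Longrightarrow> P \<noteq> UNIV" unfolding prime_ideal_def by blast
lemma prime_ideal_is: "prime_ideal P \<Longrightarrow> is_ideal P" unfolding prime_ideal_def by blast
lemma prime_one: "prime_ideal P \<Longrightarrow> 1 \<notin> P" using ideal_one prime_proper prime_ideal_is by blast
lemma prime_mult: "prime_ideal P \<Longrightarrow> a \<notin> P \<Longrightarrow> b \<notin> P \<Longrightarrow> a * b \<notin> P"
  unfolding prime_ideal_def by blast

definition goodP :: "'a::comm_ring_1 set \<Rightarrow> 'a set list \<Rightarrow> bool" where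
  "goodP J Ps \<longleftrightarrow> (\<forall>P\<in>set Ps. prime_ideal P \<and> J \<subseteq> P) \<and> (\<forall>zs. list_all2 (\<in>) zs Ps \<longrightarrow> prod_list zs \<in> J)"

lemma prod_product:
  assumes A: "is_ideal A" "is_ideal B" "is_ideal M" "a * b \<in> M"
    and u: "u \<in> M + princ a" and v: "v \<in> M + princ b"
  shows "u * v \<in> M"
proof -
  obtain m1 r where 1: "m1 \<in> M" "u = m1 + r * a" using u unfolding set_plus_def princ_def by blast
  obtain m2 s where 2: "m2 \<in> M" "v = m2 + s * b" using v unfolding set_plus_def princ_def by blast
  have "u * v = m1 * v + (r * a) * m2 + (r * s) * (a * b)" using 1 2 by (simp add: algebra_simps)
  moreover have "m1 * v \<in> M" using ideal_multR[OF A(3) 1(1)] .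
  moreover have "(r * a) * m2 \<in> M" using ideal_mult[OF A(3) 2(1)] .
  moreover have "(r * s) * (a * b) \<in> M" using ideal_mult[OF A(3) A(4)] .
  ultimately show ?thesis using ideal_add[OF A(3)] ideal_add[OF A(3)] by simp
qed

lemma primes_product:
  assumes N: "noetherian_ring TYPE('a::comm_ring_1)" and J: "is_ideal (J::'a set)"
  shows "\<exists>Ps. goodP J Ps"
proof (rule ccontr)
  assume nJ: "\<not> ?thesis"
  let ?F = "{K::'a set. is_ideal K \<and> \<not> (\<exists>Ps. goodP K Ps)}"
  have "J \<in> ?F" using J nJ by blast
  then have ne: "?F \<noteq> {}" by blast
  have idF: "\<forall>I\<in>?F. is_ideal I" by blast
  obtain M where M: "M \<in> ?F" "\<forall>X\<in>?F. M \<subseteq> X \<longrightarrow> X = M"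
    using noeth_max[OF N ne idF] by (elim bexE)
  have Mi: "is_ideal M" using M by blast
  have "goodP UNIV []" unfolding goodP_def by simp
  then have MU: "M \<noteq> UNIV" using M by blast
  have "\<not> prime_ideal M"
  proof
    assume pM: "prime_ideal M"
    have "\<forall>zs. list_all2 (\<in>) zs [M] \<longrightarrow> prod_list zs \<in> M"
    proof (intro allI impI)
      fix zs assume "list_all2 (\<in>) zs [M]"
      then obtain z where "zs = [z]" "z \<in> M" by (cases zs) auto
      then show "prod_list zs \<in> M" by simp
    qed
    then have "goodP M [M]" unfolding goodP_def using pM by simp
    then show False using M by blast
  qed
  then obtain a b where ab: "a * b \<in> M" "a \<notin> M" "b \<notin> M"
    using Mi MU unfolding prime_ideal_def by blast
  have good: "\<exists>Ps. goodP (M + princ c) Ps" if c: "c \<notin> M" for c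
  proof (rule ccontr)
    assume "\<not> ?thesis"
    moreover have "is_ideal (M + princ c)" using Mi ideal_plus ideal_princ by blast
    ultimately have "M + princ c \<in> ?F" by blast
    moreover have "M \<subseteq> M + princ c" using plus_sub1[OF ideal_princ] by blast
    ultimately have "M + princ c = M" using M by blast
    moreover have "c \<in> M + princ c" using plus_sub2[OF Mi] princ_self by blast
    ultimately show False using c by blast
  qed
  obtain Pa where Pa: "goodP (M + princ a) Pa" using good ab by blast
  obtain Pb where Pb: "goodP (M + princ b) Pb" using good ab by blast
  have g1: "\<forall>P\<in>set (Pa @ Pb). prime_ideal P \<and> M \<subseteq> P"
  proof
    fix P assume P: "P \<in> set (Pa @ Pb)"
    have s: "M \<subseteq> M + princ a" "M \<subseteq> M + princ b" using plus_sub1[OF ideal_princ] by blast+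
    show "prime_ideal P \<and> M \<subseteq> P"
    proof (cases "P \<in> set Pa")
      case True then have "prime_ideal P" "M + princ a \<subseteq> P" using Pa unfolding goodP_def by auto
      then show ?thesis using s by blast
    next
      case False then have "P \<in> set Pb" using P by simp
      then have "prime_ideal P" "M + princ b \<subseteq> P" using Pb unfolding goodP_def by auto
      then show ?thesis using s by blast
    qed
  qed
  have g2: "\<forall>zs. list_all2 (\<in>) zs (Pa @ Pb) \<longrightarrow> prod_list zs \<in> M"
  proof (intro allI impI)
    fix zs assume "list_all2 (\<in>) zs (Pa @ Pb)"
    then obtain us vs where uv: "zs = us @ vs" "list_all2 (\<in>) us Pa" "list_all2 (\<in>) vs Pb"
      by (auto simp: list_all2_append2)
    have "prod_list us \<in> M + princ a" "prod_list vs \<in> M + princ b" using uv Pa Pb unfolding goodP_def by auto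
    then have "prod_list us * prod_list vs \<in> M"
      using prod_product[OF ideal_princ ideal_princ Mi ab(1)] by blast
    then show "prod_list zs \<in> M" using uv by simp
  qed
  have "goodP M (Pa @ Pb)" unfolding goodP_def using g1 g2 by blast
  then show False using M by blast
qed

lemma avoid_prod:
  assumes Q: "prime_ideal Q"
  shows "(\<forall>P\<in>set Ps. \<exists>z\<in>P. z \<notin> Q) \<Longrightarrow> \<exists>zs. list_all2 (\<in>) zs Ps \<and> prod_list zs \<notin> Q"
proof (induction Ps)
  case Nil then show ?case using prime_one[OF Q] by simp
next
  case (Cons P Ps)
  then obtain zs where zs: "list_all2 (\<in>) zs Ps" "prod_list zs \<notin> Q" by auto
  obtain z where z: "z \<in> P" "z \<notin> Q" using Cons.prems by auto
  have "list_all2 (\<in>) (z # zs) (P # Ps)" using zs z by simp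
  moreover have "prod_list (z # zs) \<notin> Q" using prime_mult[OF Q z(2) zs(2)] by simp
  ultimately show ?case by blast
qed

lemma prime_contains_factor:
  assumes Q: "prime_ideal Q" and h: "\<forall>zs. list_all2 (\<in>) zs Ps \<longrightarrow> prod_list zs \<in> Q"
  shows "\<exists>P\<in>set Ps. P \<subseteq> Q"
  using avoid_prod[OF Q, of Ps] h by blast

lemma prod_in_factor:
  "list_all2 (\<in>) zs Ps \<Longrightarrow> Q \<in> set Ps \<Longrightarrow> is_ideal Q \<Longrightarrow> prod_list zs \<in> Q"
proof (induction zs Ps rule: list_all2_induct)
  case Nil then show ?case by simp
next
  case (Cons z zs P Ps)
  show ?case
  proof (cases "Q = P")
    case True then show ?thesis using Cons ideal_multR by simp
  next
    case False then show ?thesis using Cons ideal_mult by simp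
  qed
qed

lemma prime_avoid:
  assumes A: "is_ideal A"
  shows "(\<forall>P\<in>set Ps. prime_ideal P \<and> \<not> A \<subseteq> P) \<Longrightarrow> \<exists>a\<in>A. \<forall>P\<in>set Ps. a \<notin> P"
proof (induction "length Ps" arbitrary: Ps rule: less_induct)
  case less
  show ?case
  proof (cases Ps)
    case Nil then show ?thesis using ideal_0[OF A] by auto
  next
    case (Cons P Ps')
    show ?thesis
    proof (cases "\<exists>Q\<in>set Ps'. Q \<subseteq> P")
      case True
      then obtain Q where Q: "Q \<in> set Ps'" "Q \<subseteq> P" by blast
      let ?L = "P # removeAll Q Ps'"
      have "length (removeAll Q Ps') < length Ps'" using Q(1) by (rule length_removeAll_less)
      then have "length ?L < length Ps" using Cons by simp
      moreover have "\<forall>R\<in>set ?L. prime_ideal R \<and> \<not> A \<subseteq> R" using less.prems Cons by auto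
      ultimately obtain a where a: "a \<in> A" "\<forall>R\<in>set ?L. a \<notin> R" using less.hyps by blast
      have "\<forall>R\<in>set Ps. a \<notin> R"
      proof
        fix R assume R: "R \<in> set Ps"
        show "a \<notin> R"
        proof (cases "R = Q")
          case True then show ?thesis using a Q by auto
        next
          case False then show ?thesis using a R Cons by auto
        qed
      qed
      then show ?thesis using a by blast
    next
      case False
      have pP: "prime_ideal P" and nAP: "\<not> A \<subseteq> P" using less.prems Cons by auto
      have "\<forall>Q\<in>set Ps'. \<exists>z\<in>Q. z \<notin> P" using False by blast
      then obtain zs where zs: "list_all2 (\<in>) zs Ps'" "prod_list zs \<notin> P" using avoid_prod[OF pP] by blast
      obtain a' where a': "a' \<in> A" "a' \<notin> P" using nAP by blast
      let ?c = "a' * prod_list zs"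
      have cA: "?c \<in> A" using ideal_multR[OF A a'(1)] .
      have cP: "?c \<notin> P" using prime_mult[OF pP a'(2) zs(2)] .
      have cQ: "?c \<in> Q" if QQ: "Q \<in> set Ps'" for Q
      proof -
        have Qi: "is_ideal Q" using QQ less.prems Cons prime_ideal_is by auto
        show ?thesis using ideal_mult[OF Qi prod_in_factor[OF zs(1) QQ Qi]] .
      qed
      have "length Ps' < length Ps" using Cons by simp
      moreover have "\<forall>R\<in>set Ps'. prime_ideal R \<and> \<not> A \<subseteq> R" using less.prems Cons by auto
      ultimately obtain a where a: "a \<in> A" "\<forall>R\<in>set Ps'. a \<notin> R" using less.hyps by blast
      show ?thesis
      proof (cases "a \<in> P")
        case False then show ?thesis using a Cons by auto
      next
        case True
        have "a + ?c \<notin> P"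
        proof
          assume "a + ?c \<in> P"
          then have "(a + ?c) - a \<in> P" using ideal_diff[OF prime_ideal_is[OF pP]] True by blast
          then show False using cP by simp
        qed
        moreover have "a + ?c \<notin> R" if R: "R \<in> set Ps'" for R
        proof
          assume "a + ?c \<in> R"
          moreover have Ri: "is_ideal R" using R less.prems Cons prime_ideal_is by auto
          ultimately have "(a + ?c) - ?c \<in> R" using ideal_diff cQ[OF R] by blast
          then show False using a R by simp
        qed
        moreover have "a + ?c \<in> A" using ideal_add[OF A a(1) cA] .
        ultimately show ?thesis using Cons by auto
      qed
    qed
  qed
qed

lemma nzd_pow: "(\<forall>y. x * y = 0 \<longrightarrow> y = 0) \<Longrightarrow> x ^ j * w = 0 \<Longrightarrow> w = (0::'a::comm_ring_1)"
proof (induction j)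
  case 0 then show ?case by simp
next
  case (Suc j)
  have "x * (x ^ j * w) = 0" using Suc.prems(2) by (simp add: mult.assoc)
  then have "x ^ j * w = 0" using Suc.prems(1) by blast
  then show ?case using Suc by blast
qed

lemma decomp:
  assumes Q: "prime_ideal Q"
  shows "(\<forall>P\<in>set Ps. P \<subseteq> Q \<longrightarrow> x \<in> P) \<Longrightarrow> \<exists>zs j w. list_all2 (\<in>) zs Ps \<and> prod_list zs = x ^ j * w \<and> w \<notin> Q"
proof (induction Ps)
  case Nil
  have "list_all2 (\<in>) [] ([]::'a set list) \<and> prod_list [] = x ^ 0 * 1 \<and> (1::'a) \<notin> Q" using prime_one[OF Q] by simp
  then show ?case by blast
next
  case (Cons P Ps)
  then obtain zs j w where h: "list_all2 (\<in>) zs Ps" "prod_list zs = x ^ j * w" "w \<notin> Q" by auto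
  show ?case
  proof (cases "P \<subseteq> Q")
    case True
    then have "x \<in> P" using Cons.prems by simp
    then have "list_all2 (\<in>) (x # zs) (P # Ps) \<and> prod_list (x # zs) = x ^ Suc j * w \<and> w \<notin> Q"
      using h by (simp add: mult.assoc)
    then show ?thesis by blast
  next
    case False
    then obtain z where z: "z \<in> P" "z \<notin> Q" by blast
    have "list_all2 (\<in>) (z # zs) (P # Ps) \<and> prod_list (z # zs) = x ^ j * (z * w) \<and> z * w \<notin> Q"
      using h z prime_mult[OF Q z(2) h(3)] by (simp add: ac_simps)
    then show ?thesis by blast
  qed
qed

lemma below_prime:
  assumes N: "noetherian_ring TYPE('a::comm_ring_1)" and nz: "\<forall>y. x * y = 0 \<longrightarrow> y = 0"
    and Q: "prime_ideal (Q::'a set)" and xQ: "x \<in> Q"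
  shows "\<exists>P. prime_ideal P \<and> P \<subseteq> Q \<and> P \<noteq> Q"
proof -
  obtain Ps where Ps: "goodP {0::'a} Ps" using primes_product[OF N ideal_zero] by blast
  show ?thesis
  proof (cases "\<exists>P\<in>set Ps. P \<subseteq> Q \<and> x \<notin> P")
    case True
    then obtain P where P: "P \<in> set Ps" "P \<subseteq> Q" "x \<notin> P" by blast
    have "prime_ideal P" using Ps P(1) unfolding goodP_def by simp
    moreover have "P \<noteq> Q" using P(3) xQ by blast
    ultimately show ?thesis using P(2) by blast
  next
    case False
    then have "\<forall>P\<in>set Ps. P \<subseteq> Q \<longrightarrow> x \<in> P" by blast
    then have "\<exists>zs j w. list_all2 (\<in>) zs Ps \<and> prod_list zs = x ^ j * w \<and> w \<notin> Q"
      by (rule decomp[OF Q])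
    then obtain zs j w where h: "list_all2 (\<in>) zs Ps" "prod_list zs = x ^ j * w" "w \<notin> Q"
      by (elim exE conjE)
    have "prod_list zs \<in> {0}" using Ps h(1) unfolding goodP_def by simp
    then have "w = 0" using nzd_pow[OF nz] h(2) by simp
    then show ?thesis using h(3) ideal_0[OF prime_ideal_is[OF Q]] by simp
  qed
qed

lemma chain_shift:
  assumes P: "prime_ideal P" "P \<subseteq> Q 0" "P \<noteq> Q 0" and ch: "prime_chain Q k"
  shows "prime_chain (\<lambda>i. if i = 0 then P else Q (i - 1)) (Suc k)"
  unfolding prime_chain_def
proof (intro conjI allI impI)
  fix i assume "i \<le> Suc k"
  then show "prime_ideal (if i = 0 then P else Q (i - 1))" using P ch unfolding prime_chain_def by auto
next
  fix i assume i: "i < Suc k"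
  show "(if i = 0 then P else Q (i - 1)) \<subset> (if Suc i = 0 then P else Q (Suc i - 1))"
  proof (cases i)
    case 0 then show ?thesis using P by auto
  next
    case (Suc j) then show ?thesis using ch i unfolding prime_chain_def by auto
  qed
qed

lemma x_dim:
  assumes N: "noetherian_ring TYPE('a::comm_ring_1)" and K: "krull_dim TYPE('a) d"
    and nz: "\<forall>y. x * y = 0 \<longrightarrow> y = (0::'a)" and ch: "prime_chain Q d"
  shows "x \<notin> Q 0"
proof
  assume xQ: "x \<in> Q 0"
  have "prime_ideal (Q 0)" using ch unfolding prime_chain_def by simp
  then obtain P where P: "prime_ideal P" "P \<subseteq> Q 0" "P \<noteq> Q 0" using below_prime[OF N nz _ xQ] by blast
  have "prime_chain (\<lambda>i. if i = 0 then P else Q (i - 1)) (Suc d)" using chain_shift[OF P ch] .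
  then show False using K unfolding krull_dim_def by blast
qed

lemma goodP_prime: "goodP J Ps \<Longrightarrow> P \<in> set Ps \<Longrightarrow> prime_ideal P"
  unfolding goodP_def by simp
lemma goodP_sup: "goodP J Ps \<Longrightarrow> P \<in> set Ps \<Longrightarrow> J \<subseteq> P"
  unfolding goodP_def by simp
lemma goodP_prod: "goodP J Ps \<Longrightarrow> list_all2 (\<in>) zs Ps \<Longrightarrow> prod_list zs \<in> J"
  unfolding goodP_def by simp

definition dimle :: "'a::comm_ring_1 set \<Rightarrow> nat \<Rightarrow> bool" where
  "dimle J k \<longleftrightarrow> \<not> (\<exists>P. prime_chain P (Suc k) \<and> J \<subseteq> P 0)"

lemma pow_gen_sub:
  assumes "is_ideal J" "\<forall>xs. length xs = t \<and> set xs \<subseteq> m \<longrightarrow> prod_list xs \<in> J"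
  shows "ideal_pow m t \<subseteq> J"
  unfolding ideal_pow_def
proof (rule ideal_gen_least[OF assms(1)])
  show "{prod_list xs |xs. length xs = t \<and> set xs \<subseteq> m} \<subseteq> J" using assms(2) by blast
qed

lemma pow_ideal: "is_ideal (ideal_pow m t)"
  unfolding ideal_pow_def by (rule ideal_gen_ideal)

lemma gens_in:
  assumes "length xs = t" "set xs \<subseteq> m"
  shows "prod_list xs \<in> ideal_pow m t"
proof -
  have "prod_list xs \<in> {prod_list xs | xs. length xs = t \<and> set xs \<subseteq> m}" using assms by blast
  then show ?thesis unfolding ideal_pow_def using ideal_gen_sup by (rule subsetD[rotated])
qed

lemma pow_elem: "y \<in> m \<Longrightarrow> y ^ N \<in> ideal_pow m N"
proof -
  assume y: "y \<in> m"
  have "set (replicate N y) \<subseteq> m" using y by (auto simp: set_replicate_conv_if)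
  then show ?thesis using gens_in[of "replicate N y" N m] by simp
qed

lemma pow_mult:
  assumes r: "r \<in> m" and z: "z \<in> ideal_pow m t"
  shows "r * z \<in> ideal_pow m (Suc t)"
proof -
  let ?X = "{z. \<forall>r\<in>m. r * z \<in> ideal_pow m (Suc t)}"
  have PI: "is_ideal (ideal_pow m (Suc t))" by (rule pow_ideal)
  have Xi: "is_ideal ?X" unfolding is_ideal_def
  proof (intro conjI ballI allI)
    show "0 \<in> ?X" using ideal_0[OF PI] by simp
  next
    fix a b assume "a \<in> ?X" "b \<in> ?X"
    then show "a + b \<in> ?X" using ideal_add[OF PI] by (simp add: distrib_left)
  next
    fix a s assume "a \<in> ?X"
    then have "\<forall>r\<in>m. s * (r * a) \<in> ideal_pow m (Suc t)" using ideal_mult[OF PI] by blast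
    then show "s * a \<in> ?X" by (simp add: ac_simps)
  qed
  have "\<forall>xs. length xs = t \<and> set xs \<subseteq> m \<longrightarrow> prod_list xs \<in> ?X"
  proof (intro allI impI)
    fix xs assume xs: "length xs = t \<and> set xs \<subseteq> m"
    have "\<forall>r\<in>m. prod_list (r # xs) \<in> ideal_pow m (Suc t)" using xs gens_in[of "_ # xs" "Suc t" m] by simp
    then show "prod_list xs \<in> ?X" by simp
  qed
  then have "ideal_pow m t \<subseteq> ?X" using pow_gen_sub[OF Xi] by blast
  then show ?thesis using z r by blast
qed

lemma pow_Suc_sub: "ideal_pow m (Suc t) \<subseteq> ideal_pow m t"
proof (rule pow_gen_sub[OF pow_ideal], intro allI impI)
  fix xs :: "'a list" assume xs: "length xs = Suc t \<and> set xs \<subseteq> m"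
  then obtain y ys where "xs = y # ys" by (cases xs) auto
  then have "prod_list xs = y * prod_list ys" "prod_list ys \<in> ideal_pow m t" using xs gens_in[of ys t m] by auto
  then show "prod_list xs \<in> ideal_pow m t" using ideal_mult[OF pow_ideal] by simp
qed

lemma pow_0: "ideal_pow m 0 = UNIV"
  using gens_in[of "[]" 0 m] ideal_one[OF pow_ideal] by simp

lemma princ_in_sum: "s \<in> set ss \<Longrightarrow> princ s \<subseteq> sum_list (map princ ss)"
proof (induction ss)
  case Nil then show ?case by simp
next
  case (Cons s' ss)
  show ?case
  proof (cases "s = s'")
    case True then show ?thesis using plus_sub1[OF ideal_sum_princ] by simp
  next
    case False then have "princ s \<subseteq> sum_list (map princ ss)" using Cons by simp
    then show ?thesis using plus_sub2[OF ideal_princ, of "sum_list (map princ ss)" s'] by simp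
  qed
qed

lemma sum_princ_sub: "is_ideal I \<Longrightarrow> set ss \<subseteq> I \<Longrightarrow> sum_list (map princ ss) \<subseteq> I"
proof (induction ss)
  case Nil then show ?case using ideal_0 by simp
next
  case (Cons s ss)
  then show ?case using plus_least[OF Cons.prems(1) princ_sub[OF Cons.prems(1)]] by simp
qed

lemma fin_len:
  assumes N: "noetherian_ring TYPE('a::comm_ring_1)" and M: "maximal_ideal (m::'a set)"
  shows "\<exists>l. bnd (ideal_pow m t) UNIV l"
proof (induction t)
  case 0 then show ?case using bnd_refl pow_0 by metis
next
  case (Suc t)
  then obtain l where l: "bnd (ideal_pow m t) UNIV l" by blast
  obtain S where S: "finite S" "ideal_pow m t = ideal_gen S" using N pow_ideal unfolding noetherian_ring_def by blast
  obtain ss where ss: "set ss = S" using finite_list[OF S(1)] by blast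
  let ?A = "ideal_pow m (Suc t)" and ?B = "ideal_pow m t" and ?Sm = "sum_list (map princ ss)"
  have Ai: "is_ideal ?A" and Bi: "is_ideal ?B" by (rule pow_ideal)+
  have sB: "set ss \<subseteq> ?B" using ss S(2) ideal_gen_sup by metis
  have eq: "?A + ?Sm = ?B"
  proof
    show "?A + ?Sm \<subseteq> ?B" using plus_least[OF Bi pow_Suc_sub sum_princ_sub[OF Bi sB]] .
    have "set ss \<subseteq> ?A + ?Sm"
    proof
      fix s assume "s \<in> set ss"
      then have "s \<in> ?Sm" using princ_in_sum princ_self by blast
      then show "s \<in> ?A + ?Sm" using plus_sub2[OF Ai] by blast
    qed
    then show "?B \<subseteq> ?A + ?Sm" unfolding S(2) ss[symmetric]
      by (rule ideal_gen_least[OF ideal_plus[OF Ai ideal_sum_princ]])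
  qed
  have "\<forall>s\<in>set ss. \<forall>r\<in>m. r * s \<in> ?A" using sB pow_mult by blast
  then have "bnd ?A (?A + ?Sm) (length ss)" using bnd_gens[OF M Ai] by blast
  then have b1: "bnd ?A ?B (length ss)" using eq by simp
  have "bnd ?A UNIV (length ss + l)"
    by (rule bnd_add[OF Bi ideal_UNIV pow_Suc_sub subset_UNIV b1 l])
  then show ?case by blast
qed

lemma sop:
  assumes N: "noetherian_ring TYPE('a::comm_ring_1)" and L: "local_ring (m::'a set)"
  shows "\<forall>J. is_ideal J \<longrightarrow> dimle J k \<longrightarrow> (\<exists>ys t. length ys = k \<and> set ys \<subseteq> m \<and> ideal_pow m t \<subseteq> J + sum_list (map princ ys))"
proof (induction k)
  have M: "maximal_ideal m" using L unfolding local_ring_def by blast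
  have pm: "prime_ideal m" using max_prime[OF M] .
  case 0
  show ?case
  proof (intro allI impI)
    fix J :: "'a set" assume J: "is_ideal J" and D: "dimle J 0"
    obtain Ps where Ps: "goodP J Ps" using primes_product[OF N J] by blast
    have allm: "\<forall>P\<in>set Ps. P = m"
    proof
      fix P assume P: "P \<in> set Ps"
      then have pP: "prime_ideal P" and JP: "J \<subseteq> P" using goodP_prime[OF Ps] goodP_sup[OF Ps] by auto
      have Pm: "P \<subseteq> m" using local_sub[OF N L prime_ideal_is[OF pP] prime_proper[OF pP]] .
      show "P = m"
      proof (rule ccontr)
        assume "P \<noteq> m"
        then have "prime_chain (\<lambda>i. if i = 0 then P else m) (Suc 0)"
          unfolding prime_chain_def using pP pm Pm by auto
        then show False using D JP unfolding dimle_def by fastforce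
      qed
    qed
    have "\<forall>xs. length xs = length Ps \<and> set xs \<subseteq> m \<longrightarrow> prod_list xs \<in> J"
    proof (intro allI impI)
      fix xs :: "'a list" assume xs: "length xs = length Ps \<and> set xs \<subseteq> m"
      have "list_all2 (\<in>) xs Ps"
      proof (rule list_all2_all_nthI)
        show "length xs = length Ps" using xs by simp
      next
        fix n assume n: "n < length xs"
        then have "xs ! n \<in> m" using xs nth_mem by blast
        moreover have "Ps ! n = m" using allm n xs nth_mem by (metis)
        ultimately show "xs ! n \<in> Ps ! n" by simp
      qed
      then show "prod_list xs \<in> J" by (rule goodP_prod[OF Ps])
    qed
    then have sub: "ideal_pow m (length Ps) \<subseteq> J" by (rule pow_gen_sub[OF J])
    have e: "J + sum_list (map princ ([]::'a list)) = J"
      by (simp only: list.map sum_list.Nil add_0_right)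
    show "\<exists>ys t. length ys = 0 \<and> set ys \<subseteq> m \<and> ideal_pow m t \<subseteq> J + sum_list (map princ ys)"
    proof (intro exI[of _ "[]::'a list"] exI[of _ "length Ps"] conjI)
      show "length ([]::'a list) = 0" by simp
      show "set ([]::'a list) \<subseteq> m" by simp
      show "ideal_pow m (length Ps) \<subseteq> J + sum_list (map princ ([]::'a list))" unfolding e by (rule sub)
    qed
  qed
next
  have M: "maximal_ideal m" using L unfolding local_ring_def by blast
  have pm: "prime_ideal m" using max_prime[OF M] .
  have mi: "is_ideal m" using M unfolding maximal_ideal_def by blast
  case (Suc k)
  show ?case
  proof (intro allI impI)
    fix J :: "'a set" assume J: "is_ideal J" and D: "dimle J (Suc k)"
    obtain Ps where Ps: "goodP J Ps" using primes_product[OF N J] by blast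
    let ?M = "filter (\<lambda>P. P \<noteq> m) Ps"
    have "\<forall>P\<in>set ?M. prime_ideal P \<and> \<not> m \<subseteq> P"
    proof
      fix P assume P: "P \<in> set ?M"
      then have pP: "prime_ideal P" and Pm: "P \<noteq> m" using goodP_prime[OF Ps] by auto
      have "P \<subseteq> m" using local_sub[OF N L prime_ideal_is[OF pP] prime_proper[OF pP]] .
      then show "prime_ideal P \<and> \<not> m \<subseteq> P" using pP Pm by blast
    qed
    then obtain y where y: "y \<in> m" "\<forall>P\<in>set ?M. y \<notin> P" using prime_avoid[OF mi] by blast
    let ?J' = "J + princ y"
    have J'i: "is_ideal ?J'" using ideal_plus[OF J ideal_princ] .
    have JJ': "J \<subseteq> ?J'" using plus_sub1[OF ideal_princ] .
    have yJ': "y \<in> ?J'" using plus_sub2[OF J] princ_self by blast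
    have "dimle ?J' k" unfolding dimle_def
    proof
      assume "\<exists>Q. prime_chain Q (Suc k) \<and> ?J' \<subseteq> Q 0"
      then obtain Q where Q: "prime_chain Q (Suc k)" "?J' \<subseteq> Q 0" by blast
      have pQ0: "prime_ideal (Q 0)" and pQ1: "prime_ideal (Q 1)" and Q01: "Q 0 \<subset> Q 1"
        using Q(1) unfolding prime_chain_def by auto
      have "\<forall>zs. list_all2 (\<in>) zs Ps \<longrightarrow> prod_list zs \<in> Q 0" using goodP_prod[OF Ps] Q(2) JJ' by blast
      then obtain P where P: "P \<in> set Ps" "P \<subseteq> Q 0" using prime_contains_factor[OF pQ0] by blast
      show False
      proof (cases "P = m")
        case True
        have "Q 1 \<subseteq> m" using local_sub[OF N L prime_ideal_is[OF pQ1] prime_proper[OF pQ1]] .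
        then show False using True P Q01 by blast
      next
        case False
        then have "P \<in> set ?M" using P by simp
        then have "y \<notin> P" using y by blast
        then have "P \<noteq> Q 0" using yJ' Q(2) by blast
        moreover have pP: "prime_ideal P" "J \<subseteq> P" using goodP_prime[OF Ps P(1)] goodP_sup[OF Ps P(1)] by auto
        ultimately have "prime_chain (\<lambda>i. if i = 0 then P else Q (i - 1)) (Suc (Suc k))"
          using chain_shift[OF pP(1) P(2) _ Q(1)] by blast
        then show False using D pP(2) unfolding dimle_def by fastforce
      qed
    qed
    then obtain ys t where h: "length ys = k" "set ys \<subseteq> m" "ideal_pow m t \<subseteq> ?J' + sum_list (map princ ys)"
      using Suc.IH J'i by blast
    have "?J' + sum_list (map princ ys) = J + sum_list (map princ (y # ys))" by (simp add: add.assoc)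
    then have "length (y # ys) = Suc k \<and> set (y # ys) \<subseteq> m \<and> ideal_pow m t \<subseteq> J + sum_list (map princ (y # ys))"
      using h y by simp
    then show "\<exists>ys t. length ys = Suc k \<and> set ys \<subseteq> m \<and> ideal_pow m t \<subseteq> J + sum_list (map princ ys)" by blast
  qed
qed

theorem mainTheorem19:
  fixes m :: "'a::comm_ring_1 set" and p d c :: nat and I L :: "nat \<Rightarrow> 'a set" and x :: 'a
  assumes "noetherian_ring TYPE('a)"
    and "local_ring m"
    and "krull_dim TYPE('a) d"
    and "prime (p::nat)" and "CHAR('a) = p"
    and "c > 0"
    and "\<forall>e. is_ideal (I (p ^ e))"
    and "\<forall>e. ideal_pow m (c * p ^ e) \<subseteq> I (p ^ e)"
    and "\<forall>y. x * y = 0 \<longrightarrow> y = 0"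
    and "\<forall>e. is_ideal (L (p ^ e)) \<and> I (p ^ e) \<subseteq> L (p ^ e) \<and> L (p ^ e) \<subseteq> colon_ideal (I (p ^ e)) x"
  shows "\<exists>\<gamma>::real. \<gamma> > 0 \<and> (\<forall>e. real (quot_length (I (p ^ e))) - real (quot_length (L (p ^ e)))
           \<le> \<gamma> * real (p ^ e) powr (real d - 1))"
proof -
  note N = assms(1) and Lo = assms(2) and K = assms(3) and nz = assms(9)
  have M: "maximal_ideal m" using Lo unfolding local_ring_def by blast
  have pm: "prime_ideal m" using max_prime[OF M] .
  have p0: "p > 0" using assms(4) prime_gt_0_nat by blast
  have qpos: "real (p ^ e) > 0" for e using p0 by simp
  show ?thesis
  proof (cases "d = 0")
    case True
    have "princ x = UNIV"
    proof (rule ccontr)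
      assume "princ x \<noteq> UNIV"
      then have "princ x \<subseteq> m" using local_sub[OF N Lo ideal_princ] by blast
      then have xm: "x \<in> m" using princ_self by blast
      have "prime_chain (\<lambda>i. m) 0" unfolding prime_chain_def using pm by simp
      then have "x \<notin> m" using x_dim[OF N _ nz, of d "\<lambda>i. m"] K True by simp
      then show False using xm by simp
    qed
    then obtain r where r: "1 = r * x" unfolding princ_def by (metis UNIV_I image_iff)
    have LI: "L (p ^ e) = I (p ^ e)" for e
    proof
      show "L (p ^ e) \<subseteq> I (p ^ e)"
      proof
        fix z assume "z \<in> L (p ^ e)"
        then have "z * x \<in> I (p ^ e)" using assms(10) unfolding colon_ideal_def by blast
        then have "r * (z * x) \<in> I (p ^ e)" using ideal_mult assms(7) by blast
        moreover have "r * (z * x) = z" using r by (metis mult.assoc mult.commute mult_1)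
        ultimately show "z \<in> I (p ^ e)" by simp
      qed
      show "I (p ^ e) \<subseteq> L (p ^ e)" using assms(10) by blast
    qed
    show ?thesis
    proof (rule exI[of _ 1], intro conjI allI)
      fix e
      have "0 \<le> real (p ^ e) powr (real d - 1)" by simp
      then show "real (quot_length (I (p ^ e))) - real (quot_length (L (p ^ e))) \<le> 1 * real (p ^ e) powr (real d - 1)"
        using LI by simp
    qed simp
  next
    case False
    then have d1: "d \<ge> 1" by simp
    have "dimle (princ x) (d - 1)" unfolding dimle_def
    proof
      assume "\<exists>P. prime_chain P (Suc (d - 1)) \<and> princ x \<subseteq> P 0"
      then obtain P where P: "prime_chain P d" "princ x \<subseteq> P 0" using d1 by auto
      then have "x \<in> P 0" using princ_self by blast
      then show False using x_dim[OF N K nz P(1)] by simp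
    qed
    then obtain ys t where ys: "length ys = d - 1" "set ys \<subseteq> m"
      "ideal_pow m t \<subseteq> princ x + sum_list (map princ ys)"
      using sop[OF N Lo] ideal_princ by blast
    obtain l where l: "bnd (ideal_pow m t) UNIV l" using fin_len[OF N M] by blast
    have bQ: "bnd (princ x + sum_list (map princ ys)) UNIV l" using bnd_mono[OF l ys(3)] by simp
    define g where "g = real (c ^ (d - 1) * l) + 1"
    have key: "quot_length (I (p ^ e)) \<le> quot_length (L (p ^ e)) + (c * p ^ e) ^ (d - 1) * l" for e
    proof -
      let ?q = "p ^ e" let ?N = "c * p ^ e"
      let ?I = "I ?q" and ?L = "L ?q" and ?C = "colon_ideal (I ?q) x"
      have Ii: "is_ideal ?I" using assms(7) by blast
      have Li: "is_ideal ?L" and IL: "?I \<subseteq> ?L" and LC: "?L \<subseteq> ?C" using assms(10) by blast+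
      have Ci: "is_ideal ?C" using ideal_colon[OF Ii] .
      have mI: "ideal_pow m ?N \<subseteq> ?I" using assms(8) by blast
      obtain lN where lN: "bnd (ideal_pow m ?N) UNIV lN" using fin_len[OF N M] by blast
      have IC: "?I \<subseteq> ?C" using colon_sup[OF Ii] .
      have bC0: "bnd ?C UNIV lN" using bnd_mono[OF lN] mI IC by blast
      have bC: "bnd ?C UNIV (quot_length ?C)" using ql_bnd[OF Ci bC0] .
      have b1: "bnd ?I (?I + princ x) (quot_length ?C)" using bnd_cyclic[OF Ii bC] .
      have b2': "bnd (princ x + sum_list (map princ (map (\<lambda>y. y ^ ?N) ys))) UNIV (?N ^ length ys * l)"
        using bnd_pow_list[OF ideal_princ bQ] .
      have Ki: "is_ideal (?I + princ x)" using ideal_plus[OF Ii ideal_princ] .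
      have "set (map (\<lambda>y. y ^ ?N) ys) \<subseteq> ?I"
      proof
        fix z assume "z \<in> set (map (\<lambda>y. y ^ ?N) ys)"
        then obtain y where "y \<in> set ys" "z = y ^ ?N" by auto
        then show "z \<in> ?I" using pow_elem[of y m ?N] ys(2) mI by blast
      qed
      then have "sum_list (map princ (map (\<lambda>y. y ^ ?N) ys)) \<subseteq> ?I + princ x"
        using sum_princ_sub[OF Ii] plus_sub1[OF ideal_princ, of ?I x] by blast
      moreover have "princ x \<subseteq> ?I + princ x" using plus_sub2[OF Ii] .
      ultimately have "princ x + sum_list (map princ (map (\<lambda>y. y ^ ?N) ys)) \<subseteq> ?I + princ x"
        using plus_least[OF Ki] by blast
      then have b2: "bnd (?I + princ x) UNIV (?N ^ (d - 1) * l)" using bnd_mono[OF b2'] ys(1) by simp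
      have "bnd ?I UNIV (quot_length ?C + ?N ^ (d - 1) * l)"
        by (rule bnd_add[OF Ki ideal_UNIV plus_sub1[OF ideal_princ] subset_UNIV b1 b2])
      then have 1: "quot_length ?I \<le> quot_length ?C + ?N ^ (d - 1) * l" by (rule ql_le)
      have "bnd ?L UNIV lN" using bnd_mono[OF lN] mI IL by blast
      then have 2: "quot_length ?C \<le> quot_length ?L" using ql_mono[OF Li LC] by blast
      show ?thesis using 1 2 by linarith
    qed
    show ?thesis
    proof (rule exI[of _ g], intro conjI allI)
      have "0 \<le> real (c ^ (d - 1) * l)" by (rule of_nat_0_le_iff)
      then show "g > 0" unfolding g_def by linarith
    next
      fix e
      have pw: "real (p ^ e) powr (real d - 1) = real (p ^ e) ^ (d - 1)"
        using powr_realpow[OF qpos[of e], of "d - 1"] d1 by (simp add: of_nat_diff)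
      have "real (quot_length (I (p ^ e))) - real (quot_length (L (p ^ e))) \<le> real ((c * p ^ e) ^ (d - 1) * l)"
        using key[of e] by linarith
      also have "\<dots> = real (c ^ (d - 1) * l) * real (p ^ e) ^ (d - 1)" by (simp add: power_mult_distrib)
      also have "\<dots> \<le> g * real (p ^ e) ^ (d - 1)" unfolding g_def
        by (intro mult_right_mono) auto
      finally show "real (quot_length (I (p ^ e))) - real (quot_length (L (p ^ e))) \<le> g * real (p ^ e) powr (real d - 1)"
        using pw by simp
    qed
  qed
qed

end
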